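(* Let $\Pi=\{R_1,\dots,R_n\}$ be a logic program and let $\mathbb{P}_\Pi$ be the $\mathrm{LP}^{\mathrm{MLN}}$ program $\{\alpha:R_1,\dots,\alpha:R_n\}$. The (deterministic) stable models of $\Pi$ are exactly the (probabilistic) stable models $I$ of $\mathbb{P}_\Pi$ with $W_{\mathbb{P}_\Pi}(I)=e^{k\alpha}$, where $k$ is the number of all ground rules of $\Pi$. Moreover, if $\Pi$ has at least one stable model, then all (probabilistic) stable models of $\mathbb{P}_\Pi$ have the same probability, and are thus the stable models of $\Pi$ as well.
   Context: Fix a first-order signature $\sigma$ with no function constants of positive arity; Herbrand interpretations are identified with sets of ground atoms. A formula is negative if every occurrence of every atom is in the scope of negation. A rule has the form $A\leftarrow B\wedge N$ ($A$ a possibly empty disjunction of atoms, $B$ a conjunction of atoms, $N$ a negative formula), identified with $B\wedge N\rightarrow A$; a logic program is a finite set of rules, identified with its ground instance. For a ground program $\Pi$, the reduct $\Pi^I$ consists of $A\leftarrow B$ for all rules $A\leftarrow B\wedge N$ in $\Pi$ with $I\models N$; $I$ is a (deterministic) stable model of $\Pi$ if $I$ is a minimal Herbrand model of $\Pi^I$. An $\mathrm{LP}^{\mathrm{MLN}}$ program $\Pi$ is a finite set of weighted rules $w:R$, $w$ a real number or the symbol $\alpha$ ("infinite weight"), identified with its ground instance (weights inherited). $\overline{\Pi}=\{R\mid w:R\in\Pi\}$; $\Pi_I=\{w:R\in\Pi\mid I\models R\}$; $\mathrm{SM}[\Pi]=\{I\mid I\text{ is a stable model of }\overline{\Pi_I}\}$.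 With $\alpha$ treated as a real parameter, the weight is $W_\Pi(I)=\exp(\sum_{w:R\in\Pi_I}w)$ if $I\in\mathrm{SM}[\Pi]$ and $0$ otherwise; the probability is $P_\Pi(I)=\lim_{\alpha\to\infty}W_\Pi(I)/\sum_{J\in\mathrm{SM}[\Pi]}W_\Pi(J)$. $I$ is a (probabilistic) stable model of $\Pi$ if $P_\Pi(I)\neq 0$. *)

theory Defs
  imports Complex_Main
begin

datatype 'a fm = Atom 'a | Bot | Top | Neg "'a fm" | Conj "'a fm" "'a fm"
  | Disj "'a fm" "'a fm" | Imp "'a fm" "'a fm"

fun sat :: "'a set \<Rightarrow> 'a fm \<Rightarrow> bool" where
  "sat I (Atom a) = (a \<in> I)"
| "sat I Bot = False"
| "sat I Top = True"
| "sat I (Neg f) = (\<not> sat I f)"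
| "sat I (Conj f g) = (sat I f \<and> sat I g)"
| "sat I (Disj f g) = (sat I f \<or> sat I g)"
| "sat I (Imp f g) = (sat I f \<longrightarrow> sat I g)"

fun negative :: "'a fm \<Rightarrow> bool" where
  "negative (Atom a) = False"
| "negative Bot = True"
| "negative Top = True"
| "negative (Neg f) = True"
| "negative (Conj f g) = (negative f \<and> negative g)"
| "negative (Disj f g) = (negative f \<and> negative g)"
| "negative (Imp f g) = (negative f \<and> negative g)"

text \<open>A ground rule  A <- B /\ N : head A (disjunction of atoms, possibly empty),
  positive body B (conjunction of atoms), negative formula N.\<close>
datatype 'a rule = Rule (head: "'a set") (pos: "'a set") (neg: "'a fm")

definition wf_rule :: "'a rule \<Rightarrow> bool" where
  "wf_rule r \<longleftrightarrow> finite (head r) \<and> finite (pos r) \<and> negative (neg r)"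

definition sat_rule :: "'a set \<Rightarrow> 'a rule \<Rightarrow> bool" where
  "sat_rule I r \<longleftrightarrow> (pos r \<subseteq> I \<and> sat I (neg r) \<longrightarrow> head r \<inter> I \<noteq> {})"

definition sat_prog :: "'a set \<Rightarrow> 'a rule set \<Rightarrow> bool" where
  "sat_prog I P \<longleftrightarrow> (\<forall>r\<in>P. sat_rule I r)"

definition reduct :: "'a rule set \<Rightarrow> 'a set \<Rightarrow> 'a rule set" where
  "reduct P I = {Rule (head r) (pos r) Top | r. r \<in> P \<and> sat I (neg r)}"

definition minimal_model :: "'a rule set \<Rightarrow> 'a set \<Rightarrow> bool" where
  "minimal_model P I \<longleftrightarrow> sat_prog I P \<and> (\<forall>J. J \<subset> I \<longrightarrow> \<not> sat_prog J P)"

definition stable :: "'a rule set \<Rightarrow> 'a set \<Rightarrow> bool" where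
  "stable P I \<longleftrightarrow> minimal_model (reduct P I) I"

datatype weight = Real real | Alpha

definition wval :: "real \<Rightarrow> weight \<Rightarrow> real" where
  "wval \<alpha> w = (case w of Real x \<Rightarrow> x | Alpha \<Rightarrow> \<alpha>)"

type_synonym 'a mln = "(weight \<times> 'a rule) set"

definition rules_of :: "'a mln \<Rightarrow> 'a rule set" where
  "rules_of \<Pi> = snd ` \<Pi>"

definition sat_part :: "'a mln \<Rightarrow> 'a set \<Rightarrow> 'a mln" where
  "sat_part \<Pi> I = {wr \<in> \<Pi>. sat_rule I (snd wr)}"

definition SM :: "'a mln \<Rightarrow> 'a set set" where
  "SM \<Pi> = {I. stable (rules_of (sat_part \<Pi> I)) I}"

text \<open>Weight, with the infinite weight alpha treated as a real parameter.\<close>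
definition W :: "'a mln \<Rightarrow> real \<Rightarrow> 'a set \<Rightarrow> real" where
  "W \<Pi> \<alpha> I = (if I \<in> SM \<Pi> then exp (\<Sum>wr\<in>sat_part \<Pi> I. wval \<alpha> (fst wr)) else 0)"

definition Prob :: "'a mln \<Rightarrow> 'a set \<Rightarrow> real" where
  "Prob \<Pi> I = Lim at_top (\<lambda>\<alpha>. W \<Pi> \<alpha> I / (\<Sum>J\<in>SM \<Pi>. W \<Pi> \<alpha> J))"

definition prob_stable :: "'a mln \<Rightarrow> 'a set \<Rightarrow> bool" where
  "prob_stable \<Pi> I \<longleftrightarrow> Prob \<Pi> I \<noteq> 0"

definition hard :: "'a rule set \<Rightarrow> 'a mln" where
  "hard \<Pi> = (\<lambda>r. (Alpha, r)) ` \<Pi>"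

end

theory Submission
  imports Defs
begin

lemma exp_neg_lim: "(c::real) < 0 \<Longrightarrow> ((\<lambda>x. exp (c * x)) \<longlongrightarrow> 0) at_top"
  by (rule filterlim_compose[OF exp_at_bot])
     (rule filterlim_tendsto_neg_mult_at_bot[OF tendsto_const _ filterlim_ident])

lemma ratio_lim:
  fixes S :: "'b set" and k :: "'b \<Rightarrow> nat"
  assumes fin: "finite S" and le: "\<forall>J\<in>S. k J \<le> K" and J0: "J0 \<in> S" "k J0 = K" and I: "I \<in> S"
  shows "((\<lambda>\<alpha>::real. exp (real (k I) * \<alpha>) / (\<Sum>J\<in>S. exp (real (k J) * \<alpha>)))
          \<longlongrightarrow> (if k I = K then 1 / real (card {J\<in>S. k J = K}) else 0)) at_top"
proof -
  define g where "g J = (if k J = K then 1 else 0::real)" for J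
  have eq: "exp (real (k I) * \<alpha>) / (\<Sum>J\<in>S. exp (real (k J) * \<alpha>))
        = exp ((real (k I) - real K) * \<alpha>) / (\<Sum>J\<in>S. exp ((real (k J) - real K) * \<alpha>))" for \<alpha>
  proof -
    have "(\<Sum>J\<in>S. exp ((real (k J) - real K) * \<alpha>)) = (\<Sum>J\<in>S. exp (real (k J) * \<alpha>)) * exp (- (real K * \<alpha>))"
      unfolding sum_distrib_right by (rule sum.cong) (simp_all add: exp_add[symmetric] algebra_simps)
    moreover have "exp ((real (k I) - real K) * \<alpha>) = exp (real (k I) * \<alpha>) * exp (- (real K * \<alpha>))"
      by (simp add: exp_add[symmetric] algebra_simps)
    ultimately show ?thesis by simp
  qed
  have lim1: "((\<lambda>\<alpha>::real. exp ((real (k J) - real K) * \<alpha>)) \<longlongrightarrow> g J) at_top" if "J \<in> S" for J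
  proof (cases "k J = K")
    case True then show ?thesis by (simp add: g_def)
  next
    case False
    then have "k J < K" using le that by force
    then have "real (k J) - real K < 0" by simp
    from exp_neg_lim[OF this] show ?thesis using False by (simp add: g_def)
  qed
  have sumg: "(\<Sum>J\<in>S. g J) = real (card {J\<in>S. k J = K})"
    unfolding g_def using fin by (simp add: sum.If_cases Int_def)
  have pos: "card {J\<in>S. k J = K} \<noteq> 0" using fin J0 by auto
  have "((\<lambda>\<alpha>::real. exp ((real (k I) - real K) * \<alpha>) / (\<Sum>J\<in>S. exp ((real (k J) - real K) * \<alpha>)))
          \<longlongrightarrow> g I / (\<Sum>J\<in>S. g J)) at_top"
    by (intro tendsto_divide lim1 I tendsto_sum) (use sumg pos in auto)
  then show ?thesis unfolding eq sumg by (cases "k I = K") (simp_all add: g_def)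
qed
lemma rules_of_hard: "rules_of (hard P) = P"
  unfolding rules_of_def hard_def by force

lemma sat_part_hard: "sat_part (hard P) I = hard {r\<in>P. sat_rule I r}"
  unfolding sat_part_def hard_def by auto

lemma inj_hard: "inj (\<lambda>r. (Alpha, r))" by (auto simp: inj_def)

lemma sum_hard: "(\<Sum>wr\<in>hard P. wval \<alpha> (fst wr)) = real (card P) * \<alpha>"
  unfolding hard_def by (subst sum.reindex) (auto simp: inj_on_def wval_def)

lemma stable_sat: "stable P I \<Longrightarrow> sat_prog I P"
  unfolding stable_def minimal_model_def sat_prog_def reduct_def sat_rule_def
  by fastforce

lemma stable_sub: "stable P I \<Longrightarrow> I \<subseteq> \<Union>(head ` P)"
proof (rule ccontr)
  assume st: "stable P I" and ns: "\<not> I \<subseteq> \<Union>(head ` P)"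
  define J where "J = I \<inter> \<Union>(head ` P)"
  have "J \<subset> I" using ns J_def by auto
  moreover have "sat_prog J (reduct P I)"
  proof -
    have "sat_prog I (reduct P I)" using st unfolding stable_def minimal_model_def by simp
    then show ?thesis
      unfolding sat_prog_def reduct_def sat_rule_def J_def by fastforce
  qed
  ultimately show False using st unfolding stable_def minimal_model_def by blast
qed

theorem theorem1:
  fixes \<Pi> :: "'a rule set"
  assumes "finite \<Pi>" and "\<forall>r\<in>\<Pi>. wf_rule r"
  shows "(\<forall>I. stable \<Pi> I \<longleftrightarrow>
            (prob_stable (hard \<Pi>) I \<and>
             (\<forall>\<alpha>. W (hard \<Pi>) \<alpha> I = exp (real (card \<Pi>) * \<alpha>))))
       \<and> ((\<exists>I. stable \<Pi> I) \<longrightarrow>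
            (\<forall>I J. prob_stable (hard \<Pi>) I \<and> prob_stable (hard \<Pi>) J
                    \<longrightarrow> Prob (hard \<Pi>) I = Prob (hard \<Pi>) J)
          \<and> (\<forall>I. prob_stable (hard \<Pi>) I \<longleftrightarrow> stable \<Pi> I))"
proof -
  define sp where "sp I = {r\<in>\<Pi>. sat_rule I r}" for I
  define S where "S = SM (hard \<Pi>)"
  define k where "k I = card (sp I)" for I
  define K where "K = card \<Pi>"
  have fin: "finite \<Pi>" by fact
  have S_eq: "S = {I. stable (sp I) I}"
    unfolding S_def SM_def sat_part_hard rules_of_hard sp_def ..
  have W_eq: "W (hard \<Pi>) \<alpha> I = (if I \<in> S then exp (real (k I) * \<alpha>) else 0)" for \<alpha> I
    unfolding W_def S_def[symmetric] sat_part_hard sum_hard k_def sp_def by simp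
  have kle: "k I \<le> K" for I unfolding k_def K_def sp_def using fin by (simp add: card_mono)
  have kK: "k I = K \<longleftrightarrow> sp I = \<Pi>" for I
    unfolding k_def K_def sp_def using fin
    by (metis (no_types, lifting) card_subset_eq mem_Collect_eq subsetI)
  have stable_iff: "stable \<Pi> I \<longleftrightarrow> I \<in> S \<and> k I = K" for I
  proof
    assume st: "stable \<Pi> I"
    then have "sp I = \<Pi>" using stable_sat[OF st] unfolding sp_def sat_prog_def by auto
    then show "I \<in> S \<and> k I = K" using st kK S_eq by auto
  qed (use kK S_eq in auto)
  have finS: "finite S"
  proof (rule finite_subset)
    show "S \<subseteq> Pow (\<Union>(head ` \<Pi>))"
      using S_eq stable_sub unfolding sp_def by blast
    show "finite (Pow (\<Union>(head ` \<Pi>)))" using fin assms(2) by (simp add: wf_rule_def)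
  qed
  have denom: "(\<Sum>J\<in>S. W (hard \<Pi>) \<alpha> J) = (\<Sum>J\<in>S. exp (real (k J) * \<alpha>))" for \<alpha>
    by (rule sum.cong) (auto simp: W_eq)
  have notS: "Prob (hard \<Pi>) I = 0" if "I \<notin> S" for I
    unfolding Prob_def S_def[symmetric] W_eq using that by (simp add: tendsto_Lim[OF trivial_limit_at_top_linorder tendsto_const])
  define m where "m = card {J\<in>S. k J = K}"
  have ProbS: "Prob (hard \<Pi>) I = (if I \<in> S \<and> k I = K then 1 / real m else 0)"
    if J0: "J0 \<in> S" "k J0 = K" for I J0
  proof (cases "I \<in> S")
    case False then show ?thesis using notS by simp
  next
    case True
    have "((\<lambda>\<alpha>::real. W (hard \<Pi>) \<alpha> I / (\<Sum>J\<in>S. W (hard \<Pi>) \<alpha> J))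
          \<longlongrightarrow> (if k I = K then 1 / real m else 0)) at_top"
      unfolding denom W_eq m_def using ratio_lim[of S k K J0 I, OF finS _ J0 True] kle True
      by simp
    then show ?thesis unfolding Prob_def S_def[symmetric] using True
      by (simp add: tendsto_Lim)
  qed
  have mpos: "m > 0" if "J0 \<in> S" "k J0 = K" for J0
    unfolding m_def using finS that by (auto simp: card_gt_0_iff)
  have part1: "stable \<Pi> I \<longleftrightarrow>
            (prob_stable (hard \<Pi>) I \<and>
             (\<forall>\<alpha>. W (hard \<Pi>) \<alpha> I = exp (real (card \<Pi>) * \<alpha>)))" for I
  proof
    assume st: "stable \<Pi> I"
    then have IS: "I \<in> S" "k I = K" using stable_iff by auto
    show "prob_stable (hard \<Pi>) I \<and> (\<forall>\<alpha>. W (hard \<Pi>) \<alpha> I = exp (real (card \<Pi>) * \<alpha>))"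
      unfolding prob_stable_def using ProbS[OF IS] mpos[OF IS] IS
      by (simp add: W_eq K_def)
  next
    assume h: "prob_stable (hard \<Pi>) I \<and> (\<forall>\<alpha>. W (hard \<Pi>) \<alpha> I = exp (real (card \<Pi>) * \<alpha>))"
    then have "W (hard \<Pi>) 1 I = exp (real (card \<Pi>))" by simp
    then have "I \<in> S" "exp (real (k I)) = exp (real K)"
      unfolding W_eq K_def by (auto split: if_splits)
    then show "stable \<Pi> I" using stable_iff by simp
  qed
  have part2: "(\<forall>I J. prob_stable (hard \<Pi>) I \<and> prob_stable (hard \<Pi>) J
                    \<longrightarrow> Prob (hard \<Pi>) I = Prob (hard \<Pi>) J)
          \<and> (\<forall>I. prob_stable (hard \<Pi>) I \<longleftrightarrow> stable \<Pi> I)" if ex: "\<exists>I. stable \<Pi> I"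
  proof -
    obtain J0 where "stable \<Pi> J0" using ex by blast
    then have J0: "J0 \<in> S" "k J0 = K" using stable_iff by auto
    have ps: "prob_stable (hard \<Pi>) I \<longleftrightarrow> I \<in> S \<and> k I = K" for I
      unfolding prob_stable_def using ProbS[OF J0, of I] mpos[OF J0] by auto
    show ?thesis using ps ProbS[OF J0] stable_iff by auto
  qed
  show ?thesis using part1 part2 by blast
qed
end
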